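(* Let $\gamma\in(\tfrac12,1)$ and $\kappa>0$. There exists a constant $c>0$ (depending only on $\gamma$ and $\kappa$) such that for every $\ell\in(0,1)$, every $t_0\in(0,1)$, every $n\ge2$ and every $s\in(0,1)$, \[ \nu^{t_0}_{\ell,n}(s)\le \alpha_n s^{-\gamma}+\mathbf 1\{s\ge\ell\}\,\beta_n s^{\gamma-1}, \] where the sequences $(\alpha_n),(\beta_n)$ are defined by $\alpha_1=\kappa t_0^{\gamma-1}$, $\beta_1=\kappa t_0^{-\gamma}$ and \[ \alpha_{n+1}=c\big(\alpha_n\log(1/\ell)+\beta_n\big),\qquad \beta_{n+1}=c\big(\alpha_n\ell^{1-2\gamma}+\beta_n\log(1/\ell)\big). \]
   Context: For $\ell\in(0,1)$, $t_0\in(0,1)$, $\kappa>0$ and $n\in\mathbb N$, define for $s\in(0,1)$ \[ \nu^{t_0}_{\ell,n}(s):=\int_\ell^1\mathrm dt_1\cdots\int_\ell^1\mathrm dt_{n-1}\;\kappa\,(t_{n-1}\wedge s)^{-\gamma}(t_{n-1}\vee s)^{\gamma-1}\prod_{k=1}^{n-1}\kappa\,(t_{k-1}\wedge t_k)^{-\gamma}(t_{k-1}\vee t_k)^{\gamma-1} \] (for $n=1$ there are no integrals and the product is empty, so $\nu^{t_0}_{\ell,1}(s)=\kappa(t_0\wedge s)^{-\gamma}(t_0\vee s)^{\gamma-1}$). Equivalently $\nu^{t_0}_{\ell,n}(s)=\int_\ell^1\mathrm du\,\nu^{t_0}_{\ell,n-1}(u)\,\kappa(u\wedge s)^{-\gamma}(u\vee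 s)^{\gamma-1}$ for $n\ge2$. *)

theory Defs
  imports "HOL-Analysis.Analysis"
begin

definition kern :: "real \<Rightarrow> real \<Rightarrow> real \<Rightarrow> real \<Rightarrow> real" where
  "kern \<kappa> \<gamma> x y = \<kappa> * (min x y) powr (-\<gamma>) * (max x y) powr (\<gamma> - 1)"

text \<open>nu kappa gamma l t0 n s is the paper's nu^{t0}_{l,n}(s) for n \<ge> 1 (value 0 at n = 0 is a dummy).\<close>
fun nu :: "real \<Rightarrow> real \<Rightarrow> real \<Rightarrow> real \<Rightarrow> nat \<Rightarrow> real \<Rightarrow> real" where
  "nu \<kappa> \<gamma> l t0 0 s = 0"
| "nu \<kappa> \<gamma> l t0 (Suc 0) s = kern \<kappa> \<gamma> t0 s"
| "nu \<kappa> \<gamma> l t0 (Suc (Suc n)) s =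
     integral {l..1} (\<lambda>u. nu \<kappa> \<gamma> l t0 (Suc n) u * kern \<kappa> \<gamma> u s)"

text \<open>ab c kappa gamma l t0 m = (alpha_{m+1}, beta_{m+1}).\<close>
fun ab :: "real \<Rightarrow> real \<Rightarrow> real \<Rightarrow> real \<Rightarrow> real \<Rightarrow> nat \<Rightarrow> real \<times> real" where
  "ab c \<kappa> \<gamma> l t0 0 = (\<kappa> * t0 powr (\<gamma> - 1), \<kappa> * t0 powr (-\<gamma>))"
| "ab c \<kappa> \<gamma> l t0 (Suc m) =
     (let a = fst (ab c \<kappa> \<gamma> l t0 m); b = snd (ab c \<kappa> \<gamma> l t0 m) in
      (c * (a * ln (1 / l) + b), c * (a * l powr (1 - 2 * \<gamma>) + b * ln (1 / l))))"

definition alpha_seq :: "real \<Rightarrow> real \<Rightarrow> real \<Rightarrow> real \<Rightarrow> real \<Rightarrow> nat \<Rightarrow> real" where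
  "alpha_seq c \<kappa> \<gamma> l t0 n = fst (ab c \<kappa> \<gamma> l t0 (n - 1))"

definition beta_seq :: "real \<Rightarrow> real \<Rightarrow> real \<Rightarrow> real \<Rightarrow> real \<Rightarrow> nat \<Rightarrow> real" where
  "beta_seq c \<kappa> \<gamma> l t0 n = snd (ab c \<kappa> \<gamma> l t0 (n - 1))"

end

theory Submission
  imports Defs
begin

lemma int_powr:
  fixes a b p :: real
  assumes "0 < a" "a \<le> b" "p \<noteq> -1"
  shows "((\<lambda>u. u powr p) has_integral (b powr (p+1) - a powr (p+1)) / (p+1)) {a..b}"
proof -
  have "((\<lambda>u. u powr p) has_integral (b powr (p+1) / (p+1) - a powr (p+1) / (p+1))) {a..b}"
    using assms
  proof (intro fundamental_theorem_of_calculus)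
    fix x assume x: "x \<in> {a..b}"
    then have "x > 0" using assms by auto
    then show "((\<lambda>x. x powr (p + 1) / (p + 1)) has_vector_derivative x powr p) (at x within {a..b})"
      using assms
      by (auto intro!: derivative_eq_intros simp flip: has_real_derivative_iff_has_vector_derivative
               simp: powr_diff)
  qed auto
  then show ?thesis by (simp add: diff_divide_distrib)
qed

lemma int_inv:
  fixes a b :: real
  assumes "0 < a" "a \<le> b"
  shows "((\<lambda>u. u powr (-1)) has_integral (ln b - ln a)) {a..b}"
proof -
  have "((\<lambda>u. u powr (-1)) has_integral (ln b - ln a)) {a..b}"
    using assms
  proof (intro fundamental_theorem_of_calculus)
    fix x assume x: "x \<in> {a..b}"
    then have "x > 0" using assms by auto
    then show "(ln has_vector_derivative x powr (-1)) (at x within {a..b})"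
      by (auto intro!: derivative_eq_intros simp flip: has_real_derivative_iff_has_vector_derivative
               simp: powr_minus divide_inverse)
  qed auto
  then show ?thesis .
qed

lemma piece1:
  fixes \<gamma> \<kappa> a b l s :: real
  assumes g: "1/2 < \<gamma>" "\<gamma> < 1" and k: "0 < \<kappa>"
    and ls: "0 < l" "l \<le> s" "s \<le> 1" and ab: "0 \<le> a" "0 \<le> b"
  shows "\<exists>I. ((\<lambda>u. (a * u powr (-\<gamma>) + b * u powr (\<gamma>-1)) * kern \<kappa> \<gamma> u s) has_integral I) {l..s}
     \<and> I \<le> \<kappa>/(2*\<gamma>-1) * a * l powr (1-2*\<gamma>) * s powr (\<gamma>-1) + \<kappa>/(2*\<gamma>-1) * b * ln (1/l) * s powr (\<gamma>-1)"
proof -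
  define q where "q = 1 - 2*\<gamma>"
  have q: "q < 0" using g by (simp add: q_def)
  have i1: "((\<lambda>u. u powr (-2*\<gamma>)) has_integral (s powr q - l powr q) / q) {l..s}"
    using int_powr[of l s "-2*\<gamma>"] ls g by (simp add: q_def)
  have i2: "((\<lambda>u. u powr (-1)) has_integral (ln s - ln l)) {l..s}"
    using int_inv ls by simp
  define I where "I = \<kappa> * s powr (\<gamma>-1) * (a * ((s powr q - l powr q) / q) + b * (ln s - ln l))"
  have hI: "((\<lambda>u. \<kappa> * s powr (\<gamma>-1) * (a * u powr (-2*\<gamma>) + b * u powr (-1))) has_integral I) {l..s}"
    unfolding I_def
    by (intro has_integral_mult_right has_integral_add i1 i2)
  have hI2: "((\<lambda>u. (a * u powr (-\<gamma>) + b * u powr (\<gamma>-1)) * kern \<kappa> \<gamma> u s) has_integral I) {l..s}"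
  proof (rule has_integral_eq[OF _ hI])
    fix u assume u: "u \<in> {l..s}"
    then have up: "u > 0" using ls by auto
    have m: "min u s = u" "max u s = s" using u by auto
    have e1: "u powr (-\<gamma>) * u powr (-\<gamma>) = u powr (-2*\<gamma>)"
      by (simp add: powr_add[symmetric])
    have e2: "u powr (\<gamma>-1) * u powr (-\<gamma>) = u powr (-1)"
      by (simp add: powr_add[symmetric])
    show "\<kappa> * s powr (\<gamma>-1) * (a * u powr (-2*\<gamma>) + b * u powr (-1)) =
          (a * u powr (-\<gamma>) + b * u powr (\<gamma>-1)) * kern \<kappa> \<gamma> u s"
      unfolding kern_def m e1[symmetric] e2[symmetric] by (simp add: algebra_simps)
  qed
  have b1: "(s powr q - l powr q) / q \<le> l powr q / (2*\<gamma>-1)"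
  proof -
    have "(s powr q - l powr q) / q = (l powr q - s powr q) / (2*\<gamma>-1)"
      using q by (simp add: q_def field_simps)
    also have "\<dots> \<le> l powr q / (2*\<gamma>-1)"
      using g by (intro divide_right_mono) auto
    finally show ?thesis .
  qed
  have b2: "ln s - ln l \<le> ln (1/l)" using ls by (simp add: ln_div)
  have lnp: "0 \<le> ln (1/l)" using ls by simp
  have kc: "\<kappa> \<le> \<kappa>/(2*\<gamma>-1)" using g k by (simp add: field_simps)
  have sp: "0 < s powr (\<gamma>-1)" using ls by simp
  have "\<kappa> * (a * ((s powr q - l powr q) / q)) \<le> \<kappa> * (a * (l powr q / (2*\<gamma>-1)))"
    using b1 ab k by (intro mult_left_mono) auto
  also have "\<dots> = \<kappa>/(2*\<gamma>-1) * a * l powr q" by simp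
  finally have c1: "\<kappa> * (a * ((s powr q - l powr q) / q)) \<le> \<kappa>/(2*\<gamma>-1) * a * l powr q" .
  have "\<kappa> * (b * (ln s - ln l)) \<le> \<kappa> * (b * ln (1/l))"
    using b2 ab k by (intro mult_left_mono) auto
  also have "\<dots> \<le> \<kappa>/(2*\<gamma>-1) * (b * ln (1/l))"
    using kc ab lnp by (intro mult_right_mono) auto
  finally have c2: "\<kappa> * (b * (ln s - ln l)) \<le> \<kappa>/(2*\<gamma>-1) * b * ln (1/l)" by simp
  have "I = s powr (\<gamma>-1) * (\<kappa> * (a * ((s powr q - l powr q) / q)) + \<kappa> * (b * (ln s - ln l)))"
    unfolding I_def by (simp add: algebra_simps)
  also have "\<dots> \<le> s powr (\<gamma>-1) * (\<kappa>/(2*\<gamma>-1) * a * l powr q + \<kappa>/(2*\<gamma>-1) * b * ln (1/l))"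
    using c1 c2 sp by (intro mult_left_mono) auto
  finally have "I \<le> \<kappa>/(2*\<gamma>-1) * a * l powr (1-2*\<gamma>) * s powr (\<gamma>-1) + \<kappa>/(2*\<gamma>-1) * b * ln (1/l) * s powr (\<gamma>-1)"
    by (simp add: q_def algebra_simps)
  with hI2 show ?thesis by blast
qed

lemma piece2:
  fixes \<gamma> \<kappa> a b l s m :: real
  assumes g: "1/2 < \<gamma>" "\<gamma> < 1" and k: "0 < \<kappa>"
    and ls: "0 < l" "l \<le> m" "m \<le> 1" "0 < s" "s \<le> m" and ab: "0 \<le> a" "0 \<le> b"
  shows "\<exists>I. ((\<lambda>u. (a * u powr (-\<gamma>) + b * u powr (\<gamma>-1)) * kern \<kappa> \<gamma> u s) has_integral I) {m..1}
     \<and> I \<le> \<kappa>/(2*\<gamma>-1) * (a * ln (1/l) + b) * s powr (-\<gamma>)"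
proof -
  define q where "q = 2*\<gamma> - 1"
  have q: "q > 0" using g by (simp add: q_def)
  have i1: "((\<lambda>u. u powr (2*\<gamma>-2)) has_integral (1 - m powr q) / q) {m..1}"
    using int_powr[of m 1 "2*\<gamma>-2"] ls g by (simp add: q_def)
  have i2: "((\<lambda>u. u powr (-1)) has_integral (ln 1 - ln m)) {m..1}"
    using int_inv[of m 1] ls by simp
  define I where "I = \<kappa> * s powr (-\<gamma>) * (a * (ln 1 - ln m) + b * ((1 - m powr q) / q))"
  have hI: "((\<lambda>u. \<kappa> * s powr (-\<gamma>) * (a * u powr (-1) + b * u powr (2*\<gamma>-2))) has_integral I) {m..1}"
    unfolding I_def
    by (intro has_integral_mult_right has_integral_add i1 i2)
  have hI2: "((\<lambda>u. (a * u powr (-\<gamma>) + b * u powr (\<gamma>-1)) * kern \<kappa> \<gamma> u s) has_integral I) {m..1}"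
  proof (rule has_integral_eq[OF _ hI])
    fix u assume u: "u \<in> {m..1}"
    then have up: "u > 0" using ls by auto
    have mm: "min u s = s" "max u s = u" using u ls by auto
    have e1: "u powr (-\<gamma>) * u powr (\<gamma>-1) = u powr (-1)"
      by (simp add: powr_add[symmetric])
    have e2: "u powr (\<gamma>-1) * u powr (\<gamma>-1) = u powr (2*\<gamma>-2)"
      by (simp add: powr_add[symmetric])
    show "\<kappa> * s powr (-\<gamma>) * (a * u powr (-1) + b * u powr (2*\<gamma>-2)) =
          (a * u powr (-\<gamma>) + b * u powr (\<gamma>-1)) * kern \<kappa> \<gamma> u s"
      unfolding kern_def mm e1[symmetric] e2[symmetric] by (simp add: algebra_simps)
  qed
  have b1: "(1 - m powr q) / q \<le> 1 / q"
    using q by (intro divide_right_mono) auto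
  have b2: "ln 1 - ln m \<le> ln (1/l)" using ls by (simp add: ln_div)
  have lnp: "0 \<le> ln (1/l)" using ls by simp
  have kc: "\<kappa> \<le> \<kappa>/(2*\<gamma>-1)" using g k by (simp add: field_simps)
  have sp: "0 < s powr (-\<gamma>)" using ls by simp
  have "\<kappa> * (a * (ln 1 - ln m)) \<le> \<kappa> * (a * ln (1/l))"
    using b2 ab k by (intro mult_left_mono) auto
  also have "\<dots> \<le> \<kappa>/(2*\<gamma>-1) * (a * ln (1/l))"
    using kc ab lnp by (intro mult_right_mono) auto
  finally have c1: "\<kappa> * (a * (ln 1 - ln m)) \<le> \<kappa>/(2*\<gamma>-1) * (a * ln (1/l))" .
  have "\<kappa> * (b * ((1 - m powr q) / q)) \<le> \<kappa> * (b * (1/q))"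
    using b1 ab k by (intro mult_left_mono) auto
  also have "\<dots> = \<kappa>/(2*\<gamma>-1) * b" by (simp add: q_def)
  finally have c2: "\<kappa> * (b * ((1 - m powr q) / q)) \<le> \<kappa>/(2*\<gamma>-1) * b" .
  have "I = s powr (-\<gamma>) * (\<kappa> * (a * (ln 1 - ln m)) + \<kappa> * (b * ((1 - m powr q) / q)))"
    unfolding I_def by (simp add: algebra_simps)
  also have "\<dots> \<le> s powr (-\<gamma>) * (\<kappa>/(2*\<gamma>-1) * (a * ln (1/l)) + \<kappa>/(2*\<gamma>-1) * b)"
    using c1 c2 sp by (intro mult_left_mono) auto
  also have "\<dots> = \<kappa>/(2*\<gamma>-1) * (a * ln (1/l) + b) * s powr (-\<gamma>)"
    by (simp add: algebra_simps add_divide_distrib)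
  finally have "I \<le> \<kappa>/(2*\<gamma>-1) * (a * ln (1/l) + b) * s powr (-\<gamma>)" .
  with hI2 show ?thesis by blast
qed

lemma kern_nonneg: "0 < \<kappa> \<Longrightarrow> 0 \<le> kern \<kappa> \<gamma> x y"
  unfolding kern_def by simp

lemma step:
  fixes \<gamma> \<kappa> a b l s :: real and f :: "real \<Rightarrow> real"
  assumes g: "1/2 < \<gamma>" "\<gamma> < 1" and k: "0 < \<kappa>"
    and l: "0 < l" "l < 1" and s: "0 < s" "s \<le> 1" and ab: "0 \<le> a" "0 \<le> b"
    and f: "\<And>u. u \<in> {l..1} \<Longrightarrow> f u \<le> a * u powr (-\<gamma>) + b * u powr (\<gamma>-1)"
  shows "integral {l..1} (\<lambda>u. f u * kern \<kappa> \<gamma> u s) \<le>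
           \<kappa>/(2*\<gamma>-1) * (a * ln (1/l) + b) * s powr (-\<gamma>)
         + (if l \<le> s then \<kappa>/(2*\<gamma>-1) * (a * l powr (1-2*\<gamma>) + b * ln (1/l)) * s powr (\<gamma>-1) else 0)"
    (is "_ \<le> ?R")
proof -
  define G where "G = (\<lambda>u. (a * u powr (-\<gamma>) + b * u powr (\<gamma>-1)) * kern \<kappa> \<gamma> u s)"
  have C: "0 < \<kappa>/(2*\<gamma>-1)" using g k by simp
  have lnp: "0 \<le> ln (1/l)" using l by simp
  have t1: "0 \<le> \<kappa>/(2*\<gamma>-1) * (a * ln (1/l) + b) * s powr (-\<gamma>)"
    using C lnp ab by (intro mult_nonneg_nonneg add_nonneg_nonneg) auto
  have t2: "0 \<le> \<kappa>/(2*\<gamma>-1) * (a * l powr (1-2*\<gamma>) + b * ln (1/l)) * s powr (\<gamma>-1)"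
    using C lnp ab by (intro mult_nonneg_nonneg add_nonneg_nonneg) auto
  have Rnn: "0 \<le> ?R" using t1 t2 by simp
  have "\<exists>J. (G has_integral J) {l..1} \<and> J \<le> ?R"
  proof (cases "l \<le> s")
    case True
    obtain I1 where I1: "(G has_integral I1) {l..s}"
      "I1 \<le> \<kappa>/(2*\<gamma>-1) * a * l powr (1-2*\<gamma>) * s powr (\<gamma>-1) + \<kappa>/(2*\<gamma>-1) * b * ln (1/l) * s powr (\<gamma>-1)"
      using piece1[OF g k l(1) True s(2) ab] unfolding G_def by blast
    obtain I2 where I2: "(G has_integral I2) {s..1}"
      "I2 \<le> \<kappa>/(2*\<gamma>-1) * (a * ln (1/l) + b) * s powr (-\<gamma>)"
      using piece2[OF g k l(1) True s(2) s(1) order_refl ab] unfolding G_def by blast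
    have "(G has_integral (I1 + I2)) {l..1}"
      by (rule has_integral_combine[OF True s(2) I1(1) I2(1)])
    moreover have "I1 + I2 \<le> ?R" using True I1(2) I2(2) by (simp add: algebra_simps)
    ultimately show ?thesis by blast
  next
    case False
    obtain I2 where I2: "(G has_integral I2) {l..1}"
      "I2 \<le> \<kappa>/(2*\<gamma>-1) * (a * ln (1/l) + b) * s powr (-\<gamma>)"
      using piece2[OF g k l(1) order_refl _ s(1) _ ab] False l unfolding G_def by auto
    then show ?thesis using False by auto
  qed
  then obtain J where J: "(G has_integral J) {l..1}" "J \<le> ?R" by blast
  show ?thesis
  proof (cases "(\<lambda>u. f u * kern \<kappa> \<gamma> u s) integrable_on {l..1}")
    case True
    have "integral {l..1} (\<lambda>u. f u * kern \<kappa> \<gamma> u s) \<le> J"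
    proof (rule has_integral_le[OF integrable_integral[OF True] J(1)])
      fix u assume "u \<in> {l..1}"
      then show "f u * kern \<kappa> \<gamma> u s \<le> G u"
        unfolding G_def using f kern_nonneg[OF k] by (intro mult_right_mono) auto
    qed
    with J(2) show ?thesis by linarith
  next
    case False
    then show ?thesis using Rnn by (simp add: not_integrable_integral)
  qed
qed

lemma ab_nn:
  assumes "0 \<le> c" "0 < \<kappa>" "0 < l" "l < 1" "0 < t0"
  shows "0 \<le> fst (ab c \<kappa> \<gamma> l t0 m) \<and> 0 \<le> snd (ab c \<kappa> \<gamma> l t0 m)"
proof (induction m)
  case 0 then show ?case using assms by simp
next
  case (Suc m)
  have "0 \<le> ln (1/l)" using assms by simp
  with Suc assms show ?case
    by (auto simp: Let_def intro!: mult_nonneg_nonneg add_nonneg_nonneg)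
qed

theorem lemma2p9:
  fixes \<gamma> \<kappa> :: real
  assumes "1/2 < \<gamma>" and "\<gamma> < 1" and "0 < \<kappa>"
  shows "\<exists>c>0. \<forall>l t0 s :: real. \<forall>n :: nat.
           0 < l \<longrightarrow> l < 1 \<longrightarrow> 0 < t0 \<longrightarrow> t0 < 1 \<longrightarrow> 2 \<le> n \<longrightarrow> 0 < s \<longrightarrow> s < 1 \<longrightarrow>
           nu \<kappa> \<gamma> l t0 n s \<le> alpha_seq c \<kappa> \<gamma> l t0 n * s powr (-\<gamma>)
              + (if l \<le> s then beta_seq c \<kappa> \<gamma> l t0 n * s powr (\<gamma> - 1) else 0)"
proof -
  note g = assms(1,2) and k = assms(3)
  define c where "c = \<kappa>/(2*\<gamma>-1)"
  have c: "0 < c" using g k by (simp add: c_def)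
  have main: "nu \<kappa> \<gamma> l t0 n s \<le> alpha_seq c \<kappa> \<gamma> l t0 n * s powr (-\<gamma>)
              + (if l \<le> s then beta_seq c \<kappa> \<gamma> l t0 n * s powr (\<gamma> - 1) else 0)"
    if l: "0 < l" "l < 1" and t: "0 < t0" "t0 < 1" and n: "2 \<le> n" and s: "0 < s" "s < 1"
    for l t0 s :: real and n :: nat
  proof -
    have nn: "0 \<le> fst (ab c \<kappa> \<gamma> l t0 m) \<and> 0 \<le> snd (ab c \<kappa> \<gamma> l t0 m)" for m
      using ab_nn[of c \<kappa> l t0] c k l t by simp
    have H: "\<forall>u\<in>{l..1}. nu \<kappa> \<gamma> l t0 (Suc m) u \<le>
              fst (ab c \<kappa> \<gamma> l t0 m) * u powr (-\<gamma>) + snd (ab c \<kappa> \<gamma> l t0 m) * u powr (\<gamma>-1)" for m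
    proof (induction m)
      case 0
      show ?case
      proof
        fix u assume u: "u \<in> {l..1}"
        then have up: "0 < u" using l by auto
        have a1: "0 \<le> \<kappa> * t0 powr (\<gamma> - 1) * u powr (-\<gamma>)" using k by simp
        have a2: "0 \<le> \<kappa> * t0 powr (-\<gamma>) * u powr (\<gamma> - 1)" using k by simp
        show "nu \<kappa> \<gamma> l t0 (Suc 0) u \<le>
              fst (ab c \<kappa> \<gamma> l t0 0) * u powr (-\<gamma>) + snd (ab c \<kappa> \<gamma> l t0 0) * u powr (\<gamma>-1)"
        proof (cases "t0 \<le> u")
          case True
          then have "kern \<kappa> \<gamma> t0 u = \<kappa> * t0 powr (-\<gamma>) * u powr (\<gamma> - 1)"
            unfolding kern_def by simp
          then show ?thesis using a1 by simp
        next
          case False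
          then have "kern \<kappa> \<gamma> t0 u = \<kappa> * t0 powr (\<gamma> - 1) * u powr (-\<gamma>)"
            unfolding kern_def by (simp add: mult_ac)
          then show ?thesis using a2 by simp
        qed
      qed
    next
      case (Suc m)
      show ?case
      proof
        fix u assume u: "u \<in> {l..1}"
        have st: "integral {l..1} (\<lambda>v. nu \<kappa> \<gamma> l t0 (Suc m) v * kern \<kappa> \<gamma> v u) \<le>
           \<kappa>/(2*\<gamma>-1) * (fst (ab c \<kappa> \<gamma> l t0 m) * ln (1/l) + snd (ab c \<kappa> \<gamma> l t0 m)) * u powr (-\<gamma>)
         + (if l \<le> u then \<kappa>/(2*\<gamma>-1) * (fst (ab c \<kappa> \<gamma> l t0 m) * l powr (1-2*\<gamma>)
              + snd (ab c \<kappa> \<gamma> l t0 m) * ln (1/l)) * u powr (\<gamma>-1) else 0)"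
          using step[OF g k l, of u "fst (ab c \<kappa> \<gamma> l t0 m)" "snd (ab c \<kappa> \<gamma> l t0 m)"
                  "nu \<kappa> \<gamma> l t0 (Suc m)"] u l nn[of m] Suc.IH by auto
        then show "nu \<kappa> \<gamma> l t0 (Suc (Suc m)) u \<le>
              fst (ab c \<kappa> \<gamma> l t0 (Suc m)) * u powr (-\<gamma>) + snd (ab c \<kappa> \<gamma> l t0 (Suc m)) * u powr (\<gamma>-1)"
          using u by (simp add: Let_def c_def)
      qed
    qed
    obtain m where m: "n = Suc (Suc m)" using n by (metis add_2_eq_Suc le_Suc_ex)
    have st: "integral {l..1} (\<lambda>v. nu \<kappa> \<gamma> l t0 (Suc m) v * kern \<kappa> \<gamma> v s) \<le>
           c * (fst (ab c \<kappa> \<gamma> l t0 m) * ln (1/l) + snd (ab c \<kappa> \<gamma> l t0 m)) * s powr (-\<gamma>)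
         + (if l \<le> s then c * (fst (ab c \<kappa> \<gamma> l t0 m) * l powr (1-2*\<gamma>)
              + snd (ab c \<kappa> \<gamma> l t0 m) * ln (1/l)) * s powr (\<gamma>-1) else 0)"
      using step[OF g k l, of s "fst (ab c \<kappa> \<gamma> l t0 m)" "snd (ab c \<kappa> \<gamma> l t0 m)"
                  "nu \<kappa> \<gamma> l t0 (Suc m)"] s nn[of m] H[of m] unfolding c_def[symmetric] by auto
    then show ?thesis
      unfolding m alpha_seq_def beta_seq_def by (cases "l \<le> s") (simp_all add: Let_def)
  qed
  show ?thesis using c main by blast
qed

end
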